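(* Let $\Lambda^\ast=(\lambda^\ast_{ij})\in\mathbb{R}_+^{n\times m}$ be the true intensity matrix and let $\widehat\Lambda=(\widehat\lambda_{ij})\in\mathbb{R}_+^{n\times m}$ be any intensity matrix estimator satisfying $c_1\bar\lambda_{m,n}\le\widehat\lambda_{ij}\le C_1\bar\lambda_{m,n}$ for all $(i,j)$, where $0<c_1\le C_1<\infty$ and $C_1\bar\lambda_{m,n}\le 1/2$. Define the conditional generation error $$\Delta_{(\boldsymbol\Theta_n,\mathcal{A}_n)}:=\sum_{i=1}^n\sum_{j=1}^m \mathrm{d}_{\mathrm{KL}}\Big(\mathrm{Bern}\big(1-e^{-\lambda^\ast_{ij}}\big)\,\Big\|\,\mathrm{Bern}\big(1-e^{-\widehat\lambda_{ij}}\big)\Big).$$ Then there is a constant $C>0$ depending only on $c_1$ (and $C_1$) such that $$\frac{\Delta_{(\boldsymbol\Theta_n,\mathcal{A}_n)}}{nm}\le C\,\frac{\|\widehat\Lambda-\Lambda^\ast\|_F^2}{nm\,\bar\lambda_{m,n}}.$$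
   Context: $\bar\lambda_{m,n}>0$ is a scale parameter. In the intensity-link hypergraph model, conditionally on latent factors the incidence entries are independent with $b_{ij}\sim\mathrm{Bern}(1-e^{-\lambda_{ij}})$; $\Delta_{(\boldsymbol\Theta_n,\mathcal{A}_n)}$ is the KL divergence between the conditional incidence law under the true intensities $\Lambda^\ast$ and under the estimated intensities $\widehat\Lambda$, which by independence is the sum of the entrywise Bernoulli KL divergences. $\|\cdot\|_F$ is the Frobenius norm. *)

theory Defs
  imports Complex_Main
begin

definition bern_kl :: "real \<Rightarrow> real \<Rightarrow> real" where
  "bern_kl p q =
     (if p = 0 then 0 else p * ln (p / q)) +
     (if p = 1 then 0 else (1 - p) * ln ((1 - p) / (1 - q)))"

definition gen_error :: "nat \<Rightarrow> nat \<Rightarrow> (nat \<Rightarrow> nat \<Rightarrow> real) \<Rightarrow> (nat \<Rightarrow> nat \<Rightarrow> real) \<Rightarrow> real" where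
  "gen_error n m Lstar Lhat =
     (\<Sum>i<n. \<Sum>j<m. bern_kl (1 - exp (- Lstar i j)) (1 - exp (- Lhat i j)))"

definition frob_dist_sq :: "nat \<Rightarrow> nat \<Rightarrow> (nat \<Rightarrow> nat \<Rightarrow> real) \<Rightarrow> (nat \<Rightarrow> nat \<Rightarrow> real) \<Rightarrow> real" where
  "frob_dist_sq n m A B = (\<Sum>i<n. \<Sum>j<m. (A i j - B i j)^2)"

end

theory Submission
  imports Defs
begin

lemma kl_chi:
  fixes p q :: real
  assumes "0 \<le> p" "p \<le> 1" "0 < q" "q < 1"
  shows "bern_kl p q \<le> (p - q)^2 / (q * (1 - q))"
proof -
  have t1: "(if p = 0 then 0 else p * ln (p / q)) \<le> p * (p - q) / q"
  proof (cases "p = 0")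
    case False
    then have "p > 0" using assms by simp
    then have "ln (p / q) \<le> p / q - 1" using assms by (intro ln_le_minus_one) simp
    then have "p * ln (p / q) \<le> p * (p / q - 1)" using \<open>p>0\<close> by (intro mult_left_mono) auto
    also have "\<dots> = p * (p - q) / q" using assms by (simp add: field_simps)
    finally show ?thesis using False by simp
  qed simp
  have t2: "(if p = 1 then 0 else (1 - p) * ln ((1 - p) / (1 - q))) \<le> (1 - p) * (q - p) / (1 - q)"
  proof (cases "p = 1")
    case False
    then have "1 - p > 0" using assms by simp
    then have "ln ((1 - p) / (1 - q)) \<le> (1 - p) / (1 - q) - 1" using assms by (intro ln_le_minus_one) simp
    then have "(1 - p) * ln ((1 - p) / (1 - q)) \<le> (1 - p) * ((1 - p) / (1 - q) - 1)"
      using \<open>1 - p > 0\<close> by (intro mult_left_mono) auto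
    also have "\<dots> = (1 - p) * (q - p) / (1 - q)" using assms by (simp add: field_simps)
    finally show ?thesis using False by simp
  qed simp
  have "p * (p - q) / q + (1 - p) * (q - p) / (1 - q) = (p - q)^2 / (q * (1 - q))"
    using assms by (simp add: field_simps power2_eq_square)
  then show ?thesis using t1 t2 unfolding bern_kl_def by linarith
qed

lemma exp_lip:
  fixes a b :: real
  assumes "0 \<le> a" "0 \<le> b"
  shows "(exp (- a) - exp (- b))^2 \<le> (a - b)^2"
proof -
  have key: "\<And>x y::real. 0 \<le> x \<Longrightarrow> x \<le> y \<Longrightarrow> exp (- x) - exp (- y) \<le> y - x \<and> 0 \<le> exp (- x) - exp (- y)"
  proof -
    fix x y :: real assume h: "0 \<le> x" "x \<le> y"
    have e: "exp (- y) = exp (- x) * exp (- (y - x))" by (simp flip: exp_add)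
    have "exp (- (y - x)) \<ge> 1 - (y - x)" using exp_ge_add_one_self[of "-(y-x)"] by linarith
    moreover have "exp (- x) \<le> 1" using h by simp
    moreover have "exp (- (y - x)) \<le> 1" using h by simp
    ultimately have "exp (- x) * (1 - exp (- (y - x))) \<le> 1 * (y - x)"
      by (intro mult_mono) auto
    moreover have "0 \<le> exp (- x) * (1 - exp (- (y - x)))" using \<open>exp (- (y - x)) \<le> 1\<close> by simp
    ultimately show "exp (- x) - exp (- y) \<le> y - x \<and> 0 \<le> exp (- x) - exp (- y)"
      unfolding e by (simp add: algebra_simps)
  qed
  have "\<bar>exp (- a) - exp (- b)\<bar> \<le> \<bar>a - b\<bar>"
  proof (cases "a \<le> b")
    case True then show ?thesis using key[OF assms(1) True] by simp
  next
    case False then show ?thesis using key[OF assms(2), of a] by simp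
  qed
  then show ?thesis by (metis abs_ge_zero power2_abs power_mono)
qed

lemma entry_bound:
  fixes a b c1 lbar :: real
  assumes "0 < c1" "0 < lbar" "0 \<le> a" "c1 * lbar \<le> b" "b \<le> 1/2"
  shows "bern_kl (1 - exp (- a)) (1 - exp (- b)) \<le> (3 / c1) * ((b - a)^2 / lbar)"
proof -
  have bpos: "b > 0" using assms by (metis mult_pos_pos order_less_le_trans)
  have "exp b \<ge> 1 + b" using exp_ge_add_one_self[of b] by simp
  then have eb: "exp (- b) \<le> 1 / (1 + b)" using bpos by (simp add: exp_minus field_simps)
  have q1: "1 - exp (- b) \<ge> b / (1 + b)" using eb bpos by (simp add: field_simps)
  have q2: "exp (- b) \<ge> 1 - b" using exp_ge_add_one_self[of "-b"] by simp
  have qlt: "exp (- b) < 1" using bpos by simp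
  let ?q = "1 - exp (- b)"
  have qpos: "?q > 0" using qlt by simp
  have "?q * (1 - ?q) \<ge> (b / (1 + b)) * (1 - b)"
    using q1 q2 bpos assms(5) by (intro mult_mono) auto
  moreover have "(b / (1 + b)) * (1 - b) \<ge> b / 3"
    using bpos assms(5) by (simp add: field_simps)
  ultimately have qq: "?q * (1 - ?q) \<ge> b / 3" by linarith
  have "bern_kl (1 - exp (- a)) ?q \<le> ((1 - exp (- a)) - ?q)^2 / (?q * (1 - ?q))"
    using assms(3) qpos qlt by (intro kl_chi) auto
  also have "((1 - exp (- a)) - ?q)^2 = (exp (- a) - exp (- b))^2" by (simp add: power2_commute)
  also have "\<dots> / (?q * (1 - ?q)) \<le> (b - a)^2 / (b / 3)"
  proof -
    have "(exp (- a) - exp (- b))^2 \<le> (b - a)^2" using exp_lip[OF assms(3), of b] bpos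
      by (simp add: power2_commute)
    moreover have "b / 3 > 0" using bpos by simp
    ultimately show ?thesis using qq by (intro frac_le) auto
  qed
  also have "\<dots> = 3 * (b - a)^2 / b" using bpos by simp
  also have "\<dots> \<le> 3 * (b - a)^2 / (c1 * lbar)"
    using assms bpos by (intro divide_left_mono) auto
  also have "\<dots> = (3 / c1) * ((b - a)^2 / lbar)" by simp
  finally show ?thesis .
qed

theorem theorem4:
  fixes c1 C1 :: real
  assumes "0 < c1" and "c1 \<le> C1"
  shows "\<exists>C>0. \<forall>(n::nat) (m::nat) (lbar::real) Lstar Lhat.
           0 < lbar \<longrightarrow> C1 * lbar \<le> 1/2 \<longrightarrow>
           (\<forall>i<n. \<forall>j<m. 0 \<le> Lstar i j) \<longrightarrow>
           (\<forall>i<n. \<forall>j<m. c1 * lbar \<le> Lhat i j \<and> Lhat i j \<le> C1 * lbar) \<longrightarrow>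
           gen_error n m Lstar Lhat / (real n * real m)
             \<le> C * (frob_dist_sq n m Lhat Lstar / (real n * real m * lbar))"
proof (intro exI[of _ "3 / c1"] conjI allI impI)
  show "0 < 3 / c1" using assms by simp
  fix n m :: nat and lbar :: real and Lstar Lhat :: "nat \<Rightarrow> nat \<Rightarrow> real"
  assume lb: "0 < lbar" "C1 * lbar \<le> 1/2"
    and hs: "\<forall>i<n. \<forall>j<m. 0 \<le> Lstar i j"
    and hh: "\<forall>i<n. \<forall>j<m. c1 * lbar \<le> Lhat i j \<and> Lhat i j \<le> C1 * lbar"
  have "gen_error n m Lstar Lhat \<le> (\<Sum>i<n. \<Sum>j<m. (3 / c1) * ((Lhat i j - Lstar i j)^2 / lbar))"
    unfolding gen_error_def
  proof (intro sum_mono)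
    fix i j assume "i \<in> {..<n}" "j \<in> {..<m}"
    then show "bern_kl (1 - exp (- Lstar i j)) (1 - exp (- Lhat i j))
      \<le> (3 / c1) * ((Lhat i j - Lstar i j)^2 / lbar)"
      proof (intro entry_bound)
      have "Lhat i j \<le> C1 * lbar" using hh \<open>i \<in> {..<n}\<close> \<open>j \<in> {..<m}\<close> by auto
      then show "Lhat i j \<le> 1/2" using lb by linarith
    qed (use hs hh lb assms \<open>i \<in> {..<n}\<close> \<open>j \<in> {..<m}\<close> in auto)
  qed
  also have "\<dots> = (3 / c1) * (frob_dist_sq n m Lhat Lstar / lbar)"
    unfolding frob_dist_sq_def by (simp add: sum_distrib_left sum_divide_distrib)
  finally have g: "gen_error n m Lstar Lhat \<le> (3 / c1) * (frob_dist_sq n m Lhat Lstar / lbar)" .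
  have "gen_error n m Lstar Lhat / (real n * real m)
      \<le> (3 / c1) * (frob_dist_sq n m Lhat Lstar / lbar) / (real n * real m)"
    using g by (intro divide_right_mono) auto
  also have "\<dots> = (3 / c1) * (frob_dist_sq n m Lhat Lstar / (real n * real m * lbar))"
    by (simp add: field_simps)
  finally show "gen_error n m Lstar Lhat / (real n * real m)
      \<le> (3 / c1) * (frob_dist_sq n m Lhat Lstar / (real n * real m * lbar))" .
qed

end
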